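(* In the setting described in the context, suppose $p_j(\theta)>0$ for all $j$ and all $\theta\in\Theta$. Then $H_\theta=C_\Upsilon(\theta)$ for all $\theta\in\Theta$ if and only if the channel is quasi-classical, i.e. the vectors $|w_k(\theta)\rangle$ do not depend on $\theta$.
   Context: Let $\Theta\subseteq\mathbb{R}$ be an open interval and $D\ge1$. For $\theta\in\Theta$ let $\Phi_\theta$ be a quantum channel on $D\times D$ complex matrices and $\rho_0=|\psi_0\rangle\langle\psi_0|$ a fixed pure input state. Canonical Kraus operators are $D\times D$ matrices $\Upsilon_1(\theta),\dots,\Upsilon_D(\theta)$, differentiable in $\theta$, with $\sum_k\Upsilon_k^\dagger\Upsilon_k=\mathbb{I}$, $\Phi_\theta(\rho)=\sum_k\Upsilon_k\rho\Upsilon_k^\dagger$, and $\mathrm{tr}\{\Upsilon_k\rho_0\Upsilon_j^\dagger\}=\delta_{jk}p_k(\theta)$. Write $\Upsilon_k(\theta)|\psi_0\rangle=\sqrt{p_k(\theta)}|w_k(\theta)\rangle$ with $\{|w_k(\theta)\rangle\}$ an orthonormal basis of $\mathbb{C}^D$ differentiable in $\theta$; the output is $\rho_\theta=\sum_kp_k|w_k\rangle\langle w_k|$. Primes denote $d/d\theta$. $C_\Upsilon(\theta)=4\sum_k\mathrm{tr}\{\Upsilon_k'\rho_0\Upsilon_k'^\dagger\}$, and $H_\theta=\mathrm{tr}\{\rho_\theta\lambda^2\}$ is the SLD quantum information, $\lambda$ any Hermitian solution of $d\rho_\theta/d\theta=\frac12(\rho_\theta\lambda+\lambda\rho_\theta)$.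 *)

theory Defs
  imports "HOL-Analysis.Analysis"
begin

text \<open>D x D complex matrices are modelled as complex^'n^'n with D = CARD('n).\<close>

definition cadj :: "complex^'n^'m \<Rightarrow> complex^'m^'n" where
  "cadj A = (\<chi> i j. cnj (A $ j $ i))"

definition cinner :: "complex^'n \<Rightarrow> complex^'n \<Rightarrow> complex" where
  "cinner u v = (\<Sum>i\<in>UNIV. cnj (u $ i) * v $ i)"

definition ket_bra :: "complex^'n \<Rightarrow> complex^'n \<Rightarrow> complex^'n^'n" where
  "ket_bra u v = (\<chi> i j. u $ i * cnj (v $ j))"

definition hermitian :: "complex^'n^'n \<Rightarrow> bool" where
  "hermitian A \<longleftrightarrow> cadj A = A"

definition is_SLD :: "complex^'n^'n \<Rightarrow> complex^'n^'n \<Rightarrow> complex^'n^'n \<Rightarrow> bool" where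
  "is_SLD rho drho L \<longleftrightarrow> hermitian L \<and> drho = (1/2) *\<^sub>R (rho ** L + L ** rho)"

definition SLD_info :: "complex^'n^'n \<Rightarrow> complex^'n^'n \<Rightarrow> complex" where
  "SLD_info rho drho = (let L = (SOME L. is_SLD rho drho L) in trace (rho ** (L ** L)))"

end

theory Submission
  imports Defs
begin


type_synonym 'n cvec = "complex^'n"
type_synonym 'n cmat = "complex^'n^'n"

lemma cinner_cnj: "cinner (u::'n::finite cvec) v = cnj (cinner v u)"
  by (simp add: cinner_def mult.commute)

lemma cinner_add_right: "cinner (u::'n::finite cvec) (v + x) = cinner u v + cinner u x"
  by (simp add: cinner_def distrib_left sum.distrib)
lemma cinner_add_left: "cinner (v + x) (u::'n::finite cvec) = cinner v u + cinner x u"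
  by (simp add: cinner_def distrib_right sum.distrib)
lemma cinner_diff_right: "cinner (u::'n::finite cvec) (v - x) = cinner u v - cinner u x"
  by (simp add: cinner_def right_diff_distrib sum_subtractf)
lemma cinner_zero_right[simp]: "cinner (u::'n::finite cvec) 0 = 0" unfolding cinner_def by simp
lemma cinner_zero_left[simp]: "cinner 0 (u::'n::finite cvec) = 0" unfolding cinner_def by simp
lemma cinner_sum_right: "cinner (u::'n::finite cvec) (sum f S) = (\<Sum>i\<in>S. cinner u (f i))"
  by (induct S rule: infinite_finite_induct) (auto simp: cinner_add_right)
lemma cinner_sum_left: "cinner (sum f S) (u::'n::finite cvec) = (\<Sum>i\<in>S. cinner (f i) u)"
  by (induct S rule: infinite_finite_induct) (auto simp: cinner_add_left)
lemma cinner_scaleC_right: "cinner (u::'n::finite cvec) (c *s v) = c * cinner u v"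
  by (simp add: cinner_def sum_distrib_left algebra_simps)
lemma cinner_scaleC_left: "cinner (c *s u) (v::'n::finite cvec) = cnj c * cinner u v"
  by (simp add: cinner_def sum_distrib_left algebra_simps)
lemma cinner_scaleR_right: "cinner (u::'n::finite cvec) (r *\<^sub>R v) = of_real r * cinner u v"
  unfolding cinner_def vector_scaleR_component by (simp add: scaleR_conv_of_real sum_distrib_left ac_simps)
lemma cinner_scaleR_left: "cinner (r *\<^sub>R u) (v::'n::finite cvec) = of_real r * cinner u v"
  unfolding cinner_def vector_scaleR_component by (simp add: scaleR_conv_of_real sum_distrib_left ac_simps)

lemma ket_bra_mv: "ket_bra u v *v (x::'n::finite cvec) = cinner v x *s u"
  by (simp add: matrix_vector_mult_def ket_bra_def cinner_def vec_eq_iff sum_distrib_left algebra_simps)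

lemma cadj_mv: "cinner (cadj (M::'n::finite cmat) *v x) y = cinner x (M *v y)"
proof -
  have "cinner (cadj M *v x) y = (\<Sum>i\<in>UNIV. \<Sum>j\<in>UNIV. M $ j $ i * cnj (x $ j) * y $ i)"
    by (simp add: cinner_def cadj_def matrix_vector_mult_def cnj_sum sum_distrib_right)
  also have "\<dots> = (\<Sum>j\<in>UNIV. \<Sum>i\<in>UNIV. M $ j $ i * cnj (x $ j) * y $ i)" by (rule sum.swap)
  also have "\<dots> = cinner x (M *v y)"
    by (simp add: cinner_def matrix_vector_mult_def sum_distrib_left ac_simps)
  finally show ?thesis .
qed

lemma mm_ket_bra: "(A::'n::finite cmat) ** ket_bra u v = ket_bra (A *v u) v"
  by (simp add: matrix_matrix_mult_def matrix_vector_mult_def ket_bra_def vec_eq_iff sum_distrib_left ac_simps)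

lemma ket_bra_mm_cadj: "ket_bra u v ** cadj (B::'n::finite cmat) = ket_bra u (B *v v)"
  by (simp add: matrix_matrix_mult_def matrix_vector_mult_def ket_bra_def cadj_def vec_eq_iff sum_distrib_left algebra_simps)

lemma ket_bra_mm: "ket_bra u v ** (M::'n::finite cmat) = ket_bra u (cadj M *v v)"
  by (simp add: matrix_matrix_mult_def matrix_vector_mult_def ket_bra_def cadj_def vec_eq_iff sum_distrib_left algebra_simps)

lemma trace_ket_bra: "trace (ket_bra u (v::'n::finite cvec)) = cinner v u"
  by (simp add: trace_def ket_bra_def cinner_def mult.commute)

lemma trace_sandwich: "trace ((A::'n::finite cmat) ** ket_bra u u ** cadj A) = cinner (A *v u) (A *v u)"
  by (simp add: mm_ket_bra ket_bra_mm_cadj trace_ket_bra)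

lemma trace_ket_bra_mm: "trace (ket_bra u v ** (M::'n::finite cmat)) = cinner v (M *v u)"
  by (simp add: ket_bra_mm trace_ket_bra cadj_mv)

lemma onb_expand:
  fixes w :: "'n::finite \<Rightarrow> complex^'n"
  assumes on: "\<And>j k. cinner (w j) (w k) = (if j = k then 1 else 0)"
  shows "v = (\<Sum>j\<in>UNIV. cinner (w j) v *s w j)"
proof -
  define W :: "complex^'n^'n" where "W = (\<chi> i k. w k $ i)"
  have "cadj W ** W = mat 1"
    using on by (simp add: W_def cadj_def matrix_matrix_mult_def mat_def vec_eq_iff cinner_def)
  hence WW: "W ** cadj W = mat 1" by (simp add: matrix_left_right_inverse)
  have E: "(\<Sum>x\<in>UNIV. w x $ i * cnj (w x $ n)) = (if i = n then 1 else 0)" for i n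
  proof -
    have "(W ** cadj W) $ i $ n = (mat 1 :: complex^'n^'n) $ i $ n" by (simp only: WW)
    thus ?thesis by (simp add: W_def cadj_def matrix_matrix_mult_def mat_def)
  qed
  have "(\<Sum>j\<in>UNIV. cinner (w j) v *s w j) $ i = v $ i" for i
  proof -
    have "(\<Sum>j\<in>UNIV. cinner (w j) v *s w j) $ i = (\<Sum>j\<in>UNIV. (\<Sum>n\<in>UNIV. cnj (w j $ n) * v $ n) * w j $ i)"
      by (simp add: sum_component cinner_def)
    also have "\<dots> = (\<Sum>j\<in>UNIV. \<Sum>n\<in>UNIV. w j $ i * cnj (w j $ n) * v $ n)"
      by (simp add: sum_distrib_left sum_distrib_right ac_simps)
    also have "\<dots> = (\<Sum>n\<in>UNIV. \<Sum>j\<in>UNIV. w j $ i * cnj (w j $ n) * v $ n)" by (rule sum.swap)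
    also have "\<dots> = (\<Sum>n\<in>UNIV. (\<Sum>j\<in>UNIV. w j $ i * cnj (w j $ n)) * v $ n)"
      by (simp add: sum_distrib_right)
    also have "\<dots> = (\<Sum>n\<in>UNIV. (if i = n then 1 else 0) * v $ n)" by (simp only: E)
    also have "\<dots> = (\<Sum>n\<in>UNIV. if i = n then v $ n else 0)" by (rule sum.cong) auto
    also have "\<dots> = v $ i" by simp
    finally show ?thesis .
  qed
  thus ?thesis by (simp add: vec_eq_iff)
qed

lemma parseval:
  fixes w :: "'n::finite \<Rightarrow> complex^'n"
  assumes on: "\<And>j k. cinner (w j) (w k) = (if j = k then 1 else 0)"
  shows "cinner v v = (\<Sum>j\<in>UNIV. cnj (cinner (w j) v) * cinner (w j) v)"
proof -
  have "cinner v v = cinner v (\<Sum>j\<in>UNIV. cinner (w j) v *s w j)"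
    by (rule arg_cong[where f="cinner v"], rule onb_expand[OF on])
  also have "\<dots> = (\<Sum>j\<in>UNIV. cinner (w j) v * cinner v (w j))"
    by (simp add: cinner_sum_right cinner_scaleC_right)
  also have "\<dots> = (\<Sum>j\<in>UNIV. cnj (cinner (w j) v) * cinner (w j) v)"
    by (subst cinner_cnj[of v]) (simp add: mult.commute)
  finally show ?thesis .
qed

lemma onb_zero:
  fixes w :: "'n::finite \<Rightarrow> complex^'n"
  assumes on: "\<And>j k. cinner (w j) (w k) = (if j = k then 1 else 0)"
    and z: "\<And>j. cinner (w j) v = 0"
  shows "v = 0"
proof -
  have "v = (\<Sum>j\<in>UNIV. cinner (w j) v *s w j)" by (rule onb_expand[OF on])
  also have "\<dots> = 0" by (simp add: z)
  finally show ?thesis .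
qed

lemma mv_sum_scaleC: "(A::'n::finite cmat) *v (\<Sum>k\<in>UNIV. c k *s v k) = (\<Sum>k\<in>UNIV. c k *s (A *v v k))"
proof -
  have "(A *v (\<Sum>k\<in>UNIV. c k *s v k)) $ i = (\<Sum>k\<in>UNIV. c k *s (A *v v k)) $ i" for i
  proof -
    have "(A *v (\<Sum>k\<in>UNIV. c k *s v k)) $ i = (\<Sum>j\<in>UNIV. \<Sum>k\<in>UNIV. A $ i $ j * c k * v k $ j)"
      by (simp add: matrix_vector_mult_def sum_component sum_distrib_left ac_simps)
    also have "\<dots> = (\<Sum>k\<in>UNIV. \<Sum>j\<in>UNIV. A $ i $ j * c k * v k $ j)" by (rule sum.swap)
    also have "\<dots> = (\<Sum>k\<in>UNIV. c k *s (A *v v k)) $ i"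
      by (simp add: matrix_vector_mult_def sum_component sum_distrib_left ac_simps)
    finally show ?thesis .
  qed
  thus ?thesis by (simp add: vec_eq_iff)
qed
lemma onb_matrix_eq:
  fixes w :: "'n::finite \<Rightarrow> complex^'n" and A B :: "'n cmat"
  assumes on: "\<And>j k. cinner (w j) (w k) = (if j = k then 1 else 0)"
    and e: "\<And>j k. cinner (w j) (A *v w k) = cinner (w j) (B *v w k)"
  shows "A = B"
proof -
  have c: "A *v w k = B *v w k" for k
  proof -
    have "A *v w k = (\<Sum>j\<in>UNIV. cinner (w j) (A *v w k) *s w j)" by (rule onb_expand[OF on])
    also have "\<dots> = (\<Sum>j\<in>UNIV. cinner (w j) (B *v w k) *s w j)" by (simp add: e)
    also have "\<dots> = B *v w k" by (rule onb_expand[OF on, symmetric])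
    finally show ?thesis .
  qed
  have "A *v x = B *v x" for x
  proof -
    have "A *v x = A *v (\<Sum>k\<in>UNIV. cinner (w k) x *s w k)" by (rule arg_cong[where f="(*v) A"], rule onb_expand[OF on])
    also have "\<dots> = (\<Sum>k\<in>UNIV. cinner (w k) x *s (A *v w k))" by (rule mv_sum_scaleC)
    also have "\<dots> = (\<Sum>k\<in>UNIV. cinner (w k) x *s (B *v w k))" using c by simp
    also have "\<dots> = B *v (\<Sum>k\<in>UNIV. cinner (w k) x *s w k)" by (rule mv_sum_scaleC[symmetric])
    also have "\<dots> = B *v x" by (rule arg_cong[where f="(*v) B"], rule onb_expand[OF on, symmetric])
    finally show ?thesis .
  qed
  thus ?thesis by (simp add: matrix_eq)
qed

lemma ket_bra_scaleR_left: "ket_bra (r *\<^sub>R u) (v::complex^'n::finite) = r *\<^sub>R ket_bra u v"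
  unfolding ket_bra_def vec_eq_iff by (simp add: vector_scaleR_component)
lemma ket_bra_scaleR_right: "ket_bra u (r *\<^sub>R (v::complex^'n::finite)) = r *\<^sub>R ket_bra u v"
  unfolding ket_bra_def vec_eq_iff by (simp add: vector_scaleR_component)
lemma ket_bra_add_left: "ket_bra (u + u') (v::complex^'n::finite) = ket_bra u v + ket_bra u' v"
  unfolding ket_bra_def vec_eq_iff by (simp add: distrib_right)
lemma ket_bra_add_right: "ket_bra u (v + v'::complex^'n::finite) = ket_bra u v + ket_bra u v'"
  unfolding ket_bra_def vec_eq_iff by (simp add: distrib_left)
lemma cinner_scaleR_right': "cinner (u::complex^'n::finite) (r *\<^sub>R v) = r *\<^sub>R cinner u v"
  unfolding cinner_def by (simp add: vector_scaleR_component scaleR_sum_right)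
lemma cinner_scaleR_left': "cinner (r *\<^sub>R u) (v::complex^'n::finite) = r *\<^sub>R cinner u v"
  unfolding cinner_def by (simp add: vector_scaleR_component scaleR_sum_right)

lemma bb_cinner: "bounded_bilinear (cinner :: 'n::finite cvec \<Rightarrow> _)"
  unfolding bilinear_conv_bounded_bilinear[symmetric] bilinear_def
  by (auto intro!: linearI simp: cinner_add_left cinner_add_right cinner_scaleR_left' cinner_scaleR_right')

lemma bb_ket_bra: "bounded_bilinear (ket_bra :: 'n::finite cvec \<Rightarrow> _)"
  unfolding bilinear_conv_bounded_bilinear[symmetric] bilinear_def
  by (auto intro!: linearI simp: ket_bra_add_left ket_bra_add_right ket_bra_scaleR_left ket_bra_scaleR_right)

lemma mv_scaleR_left: "(r *\<^sub>R (A::'n::finite cmat)) *v x = r *\<^sub>R (A *v x)"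
  by (simp add: matrix_vector_mult_def vec_eq_iff scaleR_sum_right)

lemma bl_mv: "bounded_linear (\<lambda>A::'n::finite cmat. A *v x)"
  unfolding linear_conv_bounded_linear[symmetric]
  by (auto intro!: linearI simp: matrix_vector_mult_add_rdistrib mv_scaleR_left)

lemma cadj_cadj[simp]: "cadj (cadj (A::'n::finite cmat)) = A" by (simp add: cadj_def vec_eq_iff)

lemma cinner_cadj_right: "cinner x (cadj (M::'n::finite cmat) *v y) = cinner (M *v x) y"
  using cadj_mv[of "cadj M" x y] by simp

lemma mv_scaleR_right: "(A::'n::finite cmat) *v (r *\<^sub>R x) = r *\<^sub>R (A *v x)"
  unfolding matrix_vector_mult_def vec_eq_iff vector_scaleR_component
  by (simp add: scaleR_sum_right)
lemma mv_sum_left: "(sum f S) *v (x::'n::finite cvec) = (\<Sum>i\<in>S. (f i :: 'n cmat) *v x)"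
  by (induct S rule: infinite_finite_induct) (auto simp: matrix_vector_mult_add_rdistrib)
lemma mm_add_left: "((A::'n::finite cmat) + B) ** C = A ** C + B ** C"
  by (simp add: matrix_matrix_mult_def vec_eq_iff sum.distrib distrib_right)
lemma trace_zero: "trace (0::'n::finite cmat) = 0" by (simp add: trace_def)
lemma trace_mm_sum: "trace ((sum f S) ** (M::'n::finite cmat)) = (\<Sum>i\<in>S. trace (f i ** M))"
  by (induct S rule: infinite_finite_induct) (auto simp: mm_add_left trace_add trace_zero)
lemma trace_mm_scaleR: "trace ((r *\<^sub>R A) ** (M::'n::finite cmat)) = of_real r * trace (A ** M)"
  unfolding trace_def matrix_matrix_mult_def vector_scaleR_component
  by (simp add: sum_distrib_left scaleR_conv_of_real ac_simps)

lemma cinner_scaleC_delta: "cinner (x::'n::finite cvec) (c *s y) = c * cinner x y" by (rule cinner_scaleC_right)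

context
  fixes w :: "'n::finite \<Rightarrow> complex^'n" and p :: "'n \<Rightarrow> real"
  assumes on: "\<And>j k. cinner (w j) (w k) = (if j = k then 1 else 0)"
begin

definition "rho = (\<Sum>m\<in>UNIV. p m *\<^sub>R ket_bra (w m) (w m))"

lemma rho_coord: "cinner (w j) (rho *v x) = of_real (p j) * cinner (w j) x"
  by (simp add: rho_def mv_sum_left mv_scaleR_left ket_bra_mv cinner_sum_right cinner_scaleR_right
      cinner_scaleC_right on if_distrib cong: if_cong)

lemma rho_w: "rho *v w k = p k *\<^sub>R w k"
proof -
  have "rho *v w k = (\<Sum>m\<in>UNIV. p m *\<^sub>R (cinner (w m) (w k) *s w m))"
    by (simp add: rho_def mv_sum_left mv_scaleR_left ket_bra_mv)
  also have "\<dots> = (\<Sum>m\<in>UNIV. if m = k then p k *\<^sub>R w k else 0)"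
    by (rule sum.cong) (auto simp: on)
  also have "\<dots> = p k *\<^sub>R w k" by simp
  finally show ?thesis .
qed

lemma sld_coord: "cinner (w j) (((1/2) *\<^sub>R (rho ** L + L ** rho)) *v w k)
   = of_real ((p j + p k)/2) * cinner (w j) (L *v w k)"
  by (simp add: mv_scaleR_left matrix_vector_mult_add_rdistrib matrix_vector_mul_assoc[symmetric] rho_w
     mv_scaleR_right cinner_scaleR_right cinner_add_right rho_coord algebra_simps)

lemma trace_rho: "trace (rho ** M) = (\<Sum>k\<in>UNIV. of_real (p k) * cinner (w k) (M *v w k))"
  by (simp add: rho_def trace_mm_sum trace_mm_scaleR trace_ket_bra_mm)

end


lemma cnj_mult_self: "cnj z * z = of_real ((cmod z)^2)"
  using complex_norm_square[of z] by (simp add: mult.commute)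

lemma term_diag:
  fixes a :: complex and g g' :: real
  assumes g: "g > 0" and ra: "Re a = 0"
  shows "4 * (cnj (of_real g' + of_real g * a) * (of_real g' + of_real g * a))
     - of_real (g^2) * (cnj ((of_real (2*g*g') + of_real (g^2 - g^2) * a) / of_real ((g^2 + g^2)/2))
            * ((of_real (2*g*g') + of_real (g^2 - g^2) * a) / of_real ((g^2 + g^2)/2)))
     = of_real (16 * g^2 * (g^2)^2 / (g^2 + g^2)^2 * (cmod a)^2)"
  unfolding cmod_power2 using g ra by (simp add: complex_eq_iff field_simps power2_eq_square)

lemma real_off: 
  fixes P Q x :: real assumes "P + Q \<noteq> 0"
  shows "4*Q*x - Q*(((Q-P)/((P+Q)/2))^2*x) = 16*P*Q^2/(P+Q)^2*x"
proof -
  have d: "(P+Q)^2 \<noteq> 0" using assms by simp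
  have "4*Q*x - Q*(((Q-P)/((P+Q)/2))^2*x) = (4*Q*x*(P+Q)^2 - 4*Q*(Q-P)^2*x)/(P+Q)^2"
    using d by (simp add: field_simps power_divide) (simp add: power2_eq_square algebra_simps)
  also have "\<dots> = 16*P*Q^2/(P+Q)^2*x"
    by (simp add: power2_eq_square algebra_simps divide_simps)
  finally show ?thesis .
qed

lemma term_off:
  fixes a :: complex and gj gk :: real
  assumes "gj > 0" "gk > 0"
  shows "4 * (cnj (0 + of_real gk * a) * (0 + of_real gk * a))
     - of_real (gk^2) * (cnj ((0 + of_real (gk^2 - gj^2) * a) / of_real ((gj^2 + gk^2)/2))
            * ((0 + of_real (gk^2 - gj^2) * a) / of_real ((gj^2 + gk^2)/2)))
     = of_real (16 * gj^2 * (gk^2)^2 / (gj^2 + gk^2)^2 * (cmod a)^2)"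
proof -
  have h: "gj^2 + gk^2 > 0" using assms by (simp add: add_pos_pos)
  have e: "(of_real (gk^2 - gj^2) * a) / of_real ((gj^2 + gk^2)/2) = of_real ((gk^2 - gj^2)/((gj^2 + gk^2)/2)) * a"
    by simp
  have hn: "gj^2 + gk^2 \<noteq> 0" using h by linarith
  define c where "c = (gk^2 - gj^2)/((gj^2 + gk^2)/2)"
  have 1: "cnj (0 + of_real gk * a) * (0 + of_real gk * a) = of_real (gk^2 * (cmod a)^2)"
    unfolding cnj_mult_self by (simp add: norm_mult power_mult_distrib)
  have 2: "cnj (of_real c * a) * (of_real c * a) = of_real (c^2 * (cmod a)^2)"
    unfolding cnj_mult_self by (simp add: norm_mult power_mult_distrib)
  have "4 * (cnj (0 + of_real gk * a) * (0 + of_real gk * a))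
     - of_real (gk^2) * (cnj (of_real c * a) * (of_real c * a))
     = of_real (4*gk^2*(cmod a)^2 - gk^2*(c^2*(cmod a)^2))"
    unfolding 1 2 by simp
  also have "\<dots> = of_real (16 * gj^2 * (gk^2)^2 / (gj^2 + gk^2)^2 * (cmod a)^2)"
    apply (rule arg_cong[where f="of_real"])
    using real_off[OF hn, of "(cmod a)^2"] unfolding c_def by (simp add: mult.assoc del: of_real_power)
  finally have X: "4 * (cnj (0 + of_real gk * a) * (0 + of_real gk * a))
     - of_real (gk^2) * (cnj (of_real c * a) * (of_real c * a))
     = of_real (16 * gj^2 * (gk^2)^2 / (gj^2 + gk^2)^2 * (cmod a)^2)" .
  show ?thesis unfolding add_0 e using X unfolding c_def add_0 .
qed



lemma pointwise:
  fixes w w' :: "'n::finite \<Rightarrow> complex^'n" and p pd g g' :: "'n \<Rightarrow> real"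
    and Yp :: "'n \<Rightarrow> complex^'n^'n" and psi :: "complex^'n" and D :: "complex^'n^'n"
  assumes on: "\<And>j k. cinner (w j) (w k) = (if j = k then 1 else 0)"
    and gpos: "\<And>k. g k > 0" and pg: "\<And>k. p k = (g k)^2" and pdg: "\<And>k. pd k = 2 * g k * g' k"
    and wder: "\<And>j k. cinner (w' j) (w k) + cinner (w j) (w' k) = 0"
    and Yd: "\<And>k. Yp k *v psi = g' k *\<^sub>R w k + g k *\<^sub>R w' k"
    and Ddef: "D = (\<Sum>m\<in>UNIV. p m *\<^sub>R (ket_bra (w m) (w' m) + ket_bra (w' m) (w m)) + pd m *\<^sub>R ket_bra (w m) (w m))"
  shows "SLD_info (\<Sum>k\<in>UNIV. p k *\<^sub>R ket_bra (w k) (w k)) D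
           = 4 * (\<Sum>k\<in>UNIV. trace (Yp k ** ket_bra psi psi ** cadj (Yp k)))
         \<longleftrightarrow> (\<forall>k. w' k = 0)"
proof -
  define a where "a j k = cinner (w j) (w' k)" for j k
  have wa: "cinner (w' j) (w k) = - a j k" for j k
    using wder[of j k] unfolding a_def by (simp add: eq_neg_iff_add_eq_0)
  have acnj: "cnj (a k j) = - a j k" for j k
    unfolding a_def using wa[of j k] cinner_cnj[of "w' j" "w k"] by (simp add: a_def)
  have rea: "Re (a k k) = 0" for k
    using acnj[of k k] by (simp add: complex_eq_iff)
  define d where "d j k = (if j = k then complex_of_real (pd j) else 0) + complex_of_real (p k - p j) * a j k" for j k
  have Dc: "cinner (w j) (D *v w k) = d j k" for j k
  proof -
    have "cinner (w j) (D *v w k) = (\<Sum>m\<in>UNIV. of_real (p m) * (cinner (w' m) (w k) * cinner (w j) (w m)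
         + cinner (w m) (w k) * cinner (w j) (w' m)) + of_real (pd m) * (cinner (w m) (w k) * cinner (w j) (w m)))"
      unfolding Ddef by (simp add: mv_sum_left matrix_vector_mult_add_rdistrib mv_scaleR_left ket_bra_mv
        cinner_sum_right cinner_add_right cinner_scaleR_right cinner_scaleC_right distrib_left)
    also have "\<dots> = (\<Sum>m\<in>UNIV. (if m = j then of_real (p j) * cinner (w' j) (w k) else 0)
         + (if m = k then of_real (p k) * a j k else 0) + (if m = k then (if j = k then of_real (pd k) else 0) else 0))"
      by (rule sum.cong) (auto simp: on a_def distrib_left)
    also have "\<dots> = d j k" by (simp add: sum.distrib wa d_def algebra_simps)
    finally show ?thesis .
  qed
  define \<rho> where "\<rho> = (\<Sum>k\<in>UNIV. p k *\<^sub>R ket_bra (w k) (w k))"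
  have rho_eq: "\<rho> = rho w p" by (simp add: \<rho>_def rho_def[OF on])
  have ppos: "p j + p k > 0" for j k using gpos[of j] gpos[of k] pg[of j] pg[of k] by (simp add: add_pos_pos)
  define l where "l j k = d j k / complex_of_real ((p j + p k)/2)" for j k
  have nz: "complex_of_real ((p j + p k)/2) \<noteq> 0" for j k using ppos[of j k] by (simp only: of_real_eq_0_iff) simp
  have dl: "d j k = complex_of_real ((p j + p k)/2) * l j k" for j k
    unfolding l_def times_divide_eq_right using nz[of j k] by (rule nonzero_mult_div_cancel_left[symmetric])
  have Lc: "cinner (w j) (L *v w k) = l j k" if "is_SLD \<rho> D L" for L j k
  proof -
    have "D = (1/2) *\<^sub>R (\<rho> ** L + L ** \<rho>)" using that by (simp add: is_SLD_def)
    hence "d j k = complex_of_real ((p j + p k)/2) * cinner (w j) (L *v w k)"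
      using Dc[of j k] sld_coord[where w=w and p=p and j=j and L=L and k=k, OF on] by (simp add: rho_eq)
    thus ?thesis using dl[of j k] nz[of j k] mult_left_cancel by metis
  qed
  define L0 where "L0 = (\<Sum>j\<in>UNIV. \<Sum>k\<in>UNIV. ket_bra (l j k *s w j) (w k))"
  have L0c: "cinner (w j) (L0 *v w k) = l j k" for j k
    unfolding L0_def
    by (simp add: mv_sum_left ket_bra_mv cinner_sum_right cinner_scaleC_right on if_distrib if_distribR cong: if_cong)
  have lherm: "cnj (l k j) = l j k" for j k
    unfolding l_def d_def using acnj[of k j] by (auto simp: algebra_simps)
  have herm: "hermitian L0"
    unfolding hermitian_def
  proof (rule onb_matrix_eq[OF on])
    fix j k
    have "cinner (w j) (cadj L0 *v w k) = cinner (L0 *v w j) (w k)" by (rule cinner_cadj_right)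
    also have "\<dots> = cnj (cinner (w k) (L0 *v w j))" by (rule cinner_cnj)
    also have "\<dots> = l j k" using L0c[of k j] lherm[of k j] by simp
    finally show "cinner (w j) (cadj L0 *v w k) = cinner (w j) (L0 *v w k)" using L0c[of j k] by simp
  qed
  have isL0: "is_SLD \<rho> D L0"
    unfolding is_SLD_def
  proof (intro conjI herm onb_matrix_eq[OF on])
    fix j k
    show "cinner (w j) (D *v w k) = cinner (w j) ((1 / 2) *\<^sub>R (\<rho> ** L0 + L0 ** \<rho>) *v w k)"
      by (simp only: rho_eq sld_coord[where w=w and p=p and j=j and L=L0 and k=k, OF on] L0c Dc dl)
  qed
  define L where "L = (SOME L. is_SLD \<rho> D L)"
  have isL: "is_SLD \<rho> D L" unfolding L_def using isL0 by (rule someI)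
  hence hL: "cadj L = L" by (simp add: is_SLD_def hermitian_def)
  have H: "SLD_info \<rho> D = (\<Sum>k\<in>UNIV. of_real (p k) * (\<Sum>j\<in>UNIV. cnj (l j k) * l j k))"
  proof -
    have "cinner (w k) ((L ** L) *v w k) = (\<Sum>j\<in>UNIV. cnj (l j k) * l j k)" for k
    proof -
      have "cinner (w k) ((L ** L) *v w k) = cinner (w k) (cadj L *v (L *v w k))"
        by (simp add: hL matrix_vector_mul_assoc)
      also have "\<dots> = cinner (L *v w k) (L *v w k)" by (rule cinner_cadj_right)
      also have "\<dots> = (\<Sum>j\<in>UNIV. cnj (l j k) * l j k)"
        using parseval[OF on, of "L *v w k"] Lc[OF isL] by simp
      finally show ?thesis .
    qed
    thus ?thesis unfolding SLD_info_def Let_def unfolding L_def[symmetric]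
      unfolding rho_eq trace_rho[where w=w and p=p, OF on] by simp
  qed
  define u where "u j k = (if j = k then complex_of_real (g' k) else 0) + complex_of_real (g k) * a j k" for j k
  have C: "trace (Yp k ** ket_bra psi psi ** cadj (Yp k)) = (\<Sum>j\<in>UNIV. cnj (u j k) * u j k)" for k
  proof -
    have "cinner (w j) (Yp k *v psi) = u j k" for j
      unfolding Yd u_def a_def by (simp add: cinner_add_right cinner_scaleR_right on)
    thus ?thesis unfolding trace_sandwich using parseval[OF on, of "Yp k *v psi"] by simp
  qed
  define c where "c j k = 16 * p j * (p k)^2 / (p j + p k)^2" for j k
  have cpos: "c j k > 0" for j k
    unfolding c_def using ppos[of j k] gpos[of j] gpos[of k] pg[of j] pg[of k] by simp
  have trm: "4 * (cnj (u j k) * u j k) - of_real (p k) * (cnj (l j k) * l j k) = of_real (c j k * (cmod (a j k))^2)" for j k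
  proof (cases "j = k")
    case True
    show ?thesis using term_diag[OF gpos[of k] rea[of k], of "g' k"]
      unfolding True u_def l_def d_def c_def pg pdg by (simp only: simp_thms if_True)
  next
    case False
    show ?thesis using term_off[OF gpos[of j] gpos[of k], of "a j k"]
      unfolding u_def l_def d_def c_def pg by (simp only: False simp_thms if_False)
  qed
  have "4 * (\<Sum>k\<in>UNIV. trace (Yp k ** ket_bra psi psi ** cadj (Yp k))) - SLD_info \<rho> D
      = (\<Sum>k\<in>UNIV. \<Sum>j\<in>UNIV. 4 * (cnj (u j k) * u j k) - of_real (p k) * (cnj (l j k) * l j k))"
    unfolding H C by (simp add: sum_distrib_left sum_subtractf)
  also have "\<dots> = of_real (\<Sum>k\<in>UNIV. \<Sum>j\<in>UNIV. c j k * (cmod (a j k))^2)"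
    unfolding trm by simp
  finally have diff: "4 * (\<Sum>k\<in>UNIV. trace (Yp k ** ket_bra psi psi ** cadj (Yp k))) - SLD_info \<rho> D
      = of_real (\<Sum>k\<in>UNIV. \<Sum>j\<in>UNIV. c j k * (cmod (a j k))^2)" .
  have nn: "0 \<le> c j k * (cmod (a j k))^2" for j k using cpos[of j k] by simp
  have "SLD_info \<rho> D = 4 * (\<Sum>k\<in>UNIV. trace (Yp k ** ket_bra psi psi ** cadj (Yp k)))
      \<longleftrightarrow> 4 * (\<Sum>k\<in>UNIV. trace (Yp k ** ket_bra psi psi ** cadj (Yp k))) - SLD_info \<rho> D = 0"
    by auto
  also have "\<dots> \<longleftrightarrow> complex_of_real (\<Sum>k\<in>UNIV. \<Sum>j\<in>UNIV. c j k * (cmod (a j k))^2) = 0"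
    by (simp only: diff)
  also have "\<dots> \<longleftrightarrow> (\<Sum>k\<in>UNIV. \<Sum>j\<in>UNIV. c j k * (cmod (a j k))^2) = 0"
    by (rule of_real_eq_0_iff)
  also have "\<dots> \<longleftrightarrow> (\<forall>k j. c j k * (cmod (a j k))^2 = 0)"
    using nn by (simp add: sum_nonneg_eq_0_iff sum_nonneg)
  also have "\<dots> \<longleftrightarrow> (\<forall>k j. a j k = 0)"
  proof -
    have "c j k * (cmod (a j k))^2 = 0 \<longleftrightarrow> a j k = 0" for j k
      using cpos[of j k] by simp
    thus ?thesis by simp
  qed
  also have "\<dots> \<longleftrightarrow> (\<forall>k. w' k = 0)"
    unfolding a_def using onb_zero[OF on] by auto
  finally show ?thesis unfolding \<rho>_def .
qed


lemma ofreal_scaleC: "complex_of_real r *s (v::'n::finite cvec) = r *\<^sub>R v"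
  unfolding vec_eq_iff vector_scaleR_component by (simp add: scaleR_conv_of_real)

theorem lemma2p4:
  fixes \<Theta> :: "real set"
    and Y :: "real \<Rightarrow> 'n::finite \<Rightarrow> complex^'n^'n"
    and psi0 :: "complex^'n"
    and p :: "real \<Rightarrow> 'n \<Rightarrow> real"
    and w :: "real \<Rightarrow> 'n \<Rightarrow> complex^'n"
  assumes Theta_open: "open \<Theta>" and Theta_interval: "is_interval \<Theta>" and Theta_ne: "\<Theta> \<noteq> {}"
    and psi0_unit: "cinner psi0 psi0 = 1"
    and Y_diff: "\<And>\<theta> k. \<theta> \<in> \<Theta> \<Longrightarrow> (\<lambda>t. Y t k) differentiable (at \<theta>)"
    and Y_complete: "\<And>\<theta>. \<theta> \<in> \<Theta> \<Longrightarrow> (\<Sum>k\<in>UNIV. cadj (Y \<theta> k) ** Y \<theta> k) = mat 1"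
    and Y_canonical: "\<And>\<theta> j k. \<theta> \<in> \<Theta> \<Longrightarrow>
        trace (Y \<theta> k ** ket_bra psi0 psi0 ** cadj (Y \<theta> j)) = (if j = k then complex_of_real (p \<theta> k) else 0)"
    and Y_w: "\<And>\<theta> k. \<theta> \<in> \<Theta> \<Longrightarrow> Y \<theta> k *v psi0 = complex_of_real (sqrt (p \<theta> k)) *s w \<theta> k"
    and w_orthonormal: "\<And>\<theta> j k. \<theta> \<in> \<Theta> \<Longrightarrow> cinner (w \<theta> j) (w \<theta> k) = (if j = k then 1 else 0)"
    and w_diff: "\<And>\<theta> k. \<theta> \<in> \<Theta> \<Longrightarrow> (\<lambda>t. w t k) differentiable (at \<theta>)"
    and p_pos: "\<And>\<theta> j. \<theta> \<in> \<Theta> \<Longrightarrow> p \<theta> j > 0"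
  shows "(\<forall>\<theta>\<in>\<Theta>.
            SLD_info (\<Sum>k\<in>UNIV. p \<theta> k *\<^sub>R ket_bra (w \<theta> k) (w \<theta> k))
                     (vector_derivative (\<lambda>t. \<Sum>k\<in>UNIV. p t k *\<^sub>R ket_bra (w t k) (w t k)) (at \<theta>))
            = 4 * (\<Sum>k\<in>UNIV. trace (vector_derivative (\<lambda>t. Y t k) (at \<theta>) ** ket_bra psi0 psi0
                                        ** cadj (vector_derivative (\<lambda>t. Y t k) (at \<theta>)))))
         \<longleftrightarrow> (\<forall>k. \<forall>\<theta>1\<in>\<Theta>. \<forall>\<theta>2\<in>\<Theta>. w \<theta>1 k = w \<theta>2 k)"
proof -
  define w' where "w' \<theta> k = vector_derivative (\<lambda>t. w t k) (at \<theta>)" for \<theta> k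
  have step: "(SLD_info (\<Sum>k\<in>UNIV. p \<theta> k *\<^sub>R ket_bra (w \<theta> k) (w \<theta> k))
                     (vector_derivative (\<lambda>t. \<Sum>k\<in>UNIV. p t k *\<^sub>R ket_bra (w t k) (w t k)) (at \<theta>))
            = 4 * (\<Sum>k\<in>UNIV. trace (vector_derivative (\<lambda>t. Y t k) (at \<theta>) ** ket_bra psi0 psi0
                                        ** cadj (vector_derivative (\<lambda>t. Y t k) (at \<theta>)))))
         \<longleftrightarrow> (\<forall>k. w' \<theta> k = 0)" if th: "\<theta> \<in> \<Theta>" for \<theta>
  proof -
    define Yp where "Yp k = vector_derivative (\<lambda>t. Y t k) (at \<theta>)" for k
    have hasY: "((\<lambda>t. Y t k) has_vector_derivative Yp k) (at \<theta>)" for k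
      unfolding Yp_def using Y_diff[OF th] vector_derivative_works by blast
    have hasw: "((\<lambda>t. w t k) has_vector_derivative w' \<theta> k) (at \<theta>)" for k
      unfolding w'_def using w_diff[OF th] vector_derivative_works by blast
    have hasYpsi: "((\<lambda>t. Y t k *v psi0) has_vector_derivative (Yp k *v psi0)) (at \<theta>)" for k
      using bounded_linear.has_vector_derivative[OF bl_mv hasY] .
    define G' where "G' k = cinner (w \<theta> k) (Yp k *v psi0) + cinner (w' \<theta> k) (Y \<theta> k *v psi0)" for k
    have hasG: "((\<lambda>t. cinner (w t k) (Y t k *v psi0)) has_vector_derivative G' k) (at \<theta>)" for k
      unfolding G'_def using bounded_bilinear.has_vector_derivative[OF bb_cinner hasw hasYpsi] .
    define g' where "g' k = Re (G' k)" for k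
    have hasRe: "((\<lambda>t. Re (cinner (w t k) (Y t k *v psi0))) has_real_derivative g' k) (at \<theta>)" for k
      unfolding g'_def has_real_derivative_iff_has_vector_derivative
      using bounded_linear.has_vector_derivative[OF bounded_linear_Re hasG] .
    have Geq: "Re (cinner (w t k) (Y t k *v psi0)) = sqrt (p t k)" if "t \<in> \<Theta>" for t k
      using that by (simp add: Y_w cinner_scaleC_right w_orthonormal)
    have hass: "((\<lambda>t. sqrt (p t k)) has_real_derivative g' k) (at \<theta>)" for k
      by (rule has_field_derivative_transform_within_open[OF hasRe Theta_open th]) (simp add: Geq)
    define pd where "pd k = 2 * sqrt (p \<theta> k) * g' k" for k
    have hasp: "((\<lambda>t. p t k) has_real_derivative pd k) (at \<theta>)" for k
    proof -
      have "((\<lambda>t. sqrt (p t k) * sqrt (p t k)) has_real_derivative pd k) (at \<theta>)"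
        by (rule DERIV_cong[OF DERIV_mult[OF hass[of k] hass[of k]]]) (simp add: pd_def algebra_simps)
      thus ?thesis
        by (rule has_field_derivative_transform_within_open[OF _ Theta_open th])
           (simp add: p_pos less_imp_le)
    qed
    have Yd: "Yp k *v psi0 = g' k *\<^sub>R w \<theta> k + sqrt (p \<theta> k) *\<^sub>R w' \<theta> k" for k
    proof -
      have "((\<lambda>t. sqrt (p t k) *\<^sub>R w t k) has_vector_derivative
             (sqrt (p \<theta> k) *\<^sub>R w' \<theta> k + g' k *\<^sub>R w \<theta> k)) (at \<theta>)"
        by (rule has_vector_derivative_scaleR[OF hass hasw])
      hence "((\<lambda>t. Y t k *v psi0) has_vector_derivative
             (sqrt (p \<theta> k) *\<^sub>R w' \<theta> k + g' k *\<^sub>R w \<theta> k)) (at \<theta>)"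
        by (rule has_vector_derivative_transform_within_open[OF _ Theta_open th])
           (simp add: Y_w ofreal_scaleC)
      from vector_derivative_unique_at[OF hasYpsi this] show ?thesis by (simp add: add.commute)
    qed
    have wder: "cinner (w' \<theta> j) (w \<theta> k) + cinner (w \<theta> j) (w' \<theta> k) = 0" for j k
    proof -
      have d1: "((\<lambda>t. cinner (w t j) (w t k)) has_vector_derivative
          (cinner (w \<theta> j) (w' \<theta> k) + cinner (w' \<theta> j) (w \<theta> k))) (at \<theta>)"
        using bounded_bilinear.has_vector_derivative[OF bb_cinner hasw hasw] .
      have "((\<lambda>t. if j = k then 1 else 0) has_vector_derivative 0) (at \<theta>)" by simp
      hence d2: "((\<lambda>t. cinner (w t j) (w t k)) has_vector_derivative 0) (at \<theta>)"
        by (rule has_vector_derivative_transform_within_open[OF _ Theta_open th]) (simp add: w_orthonormal)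
      from vector_derivative_unique_at[OF d1 d2] show ?thesis by (simp add: add.commute)
    qed
    define D where "D = (\<Sum>m\<in>UNIV. p \<theta> m *\<^sub>R (ket_bra (w \<theta> m) (w' \<theta> m) + ket_bra (w' \<theta> m) (w \<theta> m)) + pd m *\<^sub>R ket_bra (w \<theta> m) (w \<theta> m))"
    have hasrho: "((\<lambda>t. \<Sum>k\<in>UNIV. p t k *\<^sub>R ket_bra (w t k) (w t k)) has_vector_derivative D) (at \<theta>)"
      unfolding D_def
      by (rule has_vector_derivative_sum,
          rule has_vector_derivative_scaleR[OF hasp bounded_bilinear.has_vector_derivative[OF bb_ket_bra hasw hasw]])
    have pt: "SLD_info (\<Sum>k\<in>UNIV. p \<theta> k *\<^sub>R ket_bra (w \<theta> k) (w \<theta> k)) D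
           = 4 * (\<Sum>k\<in>UNIV. trace (Yp k ** ket_bra psi0 psi0 ** cadj (Yp k)))
         \<longleftrightarrow> (\<forall>k. w' \<theta> k = 0)"
      by (rule pointwise[where g="\<lambda>k. sqrt (p \<theta> k)" and g'=g' and pd=pd,
            OF w_orthonormal[OF th] _ _ pd_def wder Yd D_def])
         (simp_all add: p_pos[OF th] less_imp_le)
    show ?thesis using pt vector_derivative_at[OF hasrho] unfolding Yp_def by simp
  qed
  have A: "(\<forall>\<theta>\<in>\<Theta>.
            SLD_info (\<Sum>k\<in>UNIV. p \<theta> k *\<^sub>R ket_bra (w \<theta> k) (w \<theta> k))
                     (vector_derivative (\<lambda>t. \<Sum>k\<in>UNIV. p t k *\<^sub>R ket_bra (w t k) (w t k)) (at \<theta>))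
            = 4 * (\<Sum>k\<in>UNIV. trace (vector_derivative (\<lambda>t. Y t k) (at \<theta>) ** ket_bra psi0 psi0
                                        ** cadj (vector_derivative (\<lambda>t. Y t k) (at \<theta>)))))
       \<longleftrightarrow> (\<forall>\<theta>\<in>\<Theta>. \<forall>k. w' \<theta> k = 0)"
    by (rule ball_cong[OF refl step])
  have B: "(\<forall>\<theta>\<in>\<Theta>. \<forall>k. w' \<theta> k = 0) \<longleftrightarrow> (\<forall>k. \<forall>\<theta>1\<in>\<Theta>. \<forall>\<theta>2\<in>\<Theta>. w \<theta>1 k = w \<theta>2 k)"
  proof
    assume z: "\<forall>\<theta>\<in>\<Theta>. \<forall>k. w' \<theta> k = 0"
    show "\<forall>k. \<forall>\<theta>1\<in>\<Theta>. \<forall>\<theta>2\<in>\<Theta>. w \<theta>1 k = w \<theta>2 k"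
    proof (intro allI)
      fix k
      have "\<exists>c. \<forall>x\<in>\<Theta>. w x k = c"
      proof (rule has_derivative_zero_constant[OF is_interval_convex[OF Theta_interval]])
        fix x assume x: "x \<in> \<Theta>"
        have "((\<lambda>t. w t k) has_vector_derivative w' x k) (at x)"
          unfolding w'_def using w_diff[OF x] vector_derivative_works by blast
        hence "((\<lambda>t. w t k) has_vector_derivative 0) (at x)" using z x by simp
        hence "((\<lambda>t. w t k) has_derivative (\<lambda>h. 0)) (at x)" by (simp add: has_vector_derivative_def)
        thus "((\<lambda>t. w t k) has_derivative (\<lambda>h. 0)) (at x within \<Theta>)" by (rule has_derivative_at_withinI)
      qed
      thus "\<forall>\<theta>1\<in>\<Theta>. \<forall>\<theta>2\<in>\<Theta>. w \<theta>1 k = w \<theta>2 k" by auto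
    qed
  next
    assume c: "\<forall>k. \<forall>\<theta>1\<in>\<Theta>. \<forall>\<theta>2\<in>\<Theta>. w \<theta>1 k = w \<theta>2 k"
    show "\<forall>\<theta>\<in>\<Theta>. \<forall>k. w' \<theta> k = 0"
    proof (intro ballI allI)
      fix \<theta> k assume th: "\<theta> \<in> \<Theta>"
      have "((\<lambda>t. w \<theta> k) has_vector_derivative 0) (at \<theta>)" by simp
      hence "((\<lambda>t. w t k) has_vector_derivative 0) (at \<theta>)"
        by (rule has_vector_derivative_transform_within_open[OF _ Theta_open th]) (use c th in blast)
      thus "w' \<theta> k = 0" unfolding w'_def by (rule vector_derivative_at)
    qed
  qed
  show ?thesis using A B by (rule trans)
qed


end
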